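(* Let $d\ge1$, let $T$ be a $d\times d$ column-stochastic matrix ($T_{ij}\ge0$, $\sum_i T_{ij}=1$ for all $j$), and let $\Phi$ be any quantum channel on $d\times d$ matrices whose classical action is $T$. For each row $i$ write $\sum_{j=1}^d T_{ij}=n_i+a_i$ with $n_i\in\mathbb{Z}_{\ge0}$ and $a_i\in[0,1)$, and define the vector $\mathbf{s}^{(i)}(T)\in\mathbb{R}^{d^2}$ whose first $n_i$ entries equal $1$, whose $(n_i+1)$-th entry equals $a_i$, and whose remaining entries are $0$. Let $\boldsymbol{\mu}^\succ(T)=\frac1d\sum_{i=1}^d\mathbf{s}^{(i)}(T)$. Then $\boldsymbol{\mu}^\succ(T)\succ\boldsymbol{\lambda}(J_\Phi)$.
   Context: Fix an orthonormal basis $\{|i\rangle\}_{i=1}^d$ of $\mathbb{C}^d$, $|\Omega\rangle=\sum_i|ii\rangle$. The Jamio{\l}kowski state of a channel $\Phi$ is $J_\Phi=\frac1d(\Phi\otimes\mathcal{I})(|\Omega\rangle\langle\Omega|)$. The classical action of $\Phi$ is the matrix $T$ with $T_{ij}=\langle i|\Phi(|j\rangle\langle j|)|i\rangle$. $\boldsymbol{\lambda}(X)$ denotes the eigenvalues of a Hermitian $X$ in non-increasing order. For real vectors $x,y$ of equal length $n$, $x\succ y$ means $\sum_{i=1}^k x_i^\downarrow\ge\sum_{i=1}^k y_i^\downarrow$ for all $k=1,\dots,n$, with $x^\downarrow$ the non-increasing rearrangement. *)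

theory Defs
  imports "Jordan_Normal_Form.Char_Poly"
begin

definition psd_mat :: "nat \<Rightarrow> complex mat \<Rightarrow> bool" where
  "psd_mat n X \<longleftrightarrow> X \<in> carrier_mat n n \<and>
     (\<forall>v \<in> carrier_vec n.
        let q = (\<Sum>i<n. \<Sum>j<n. cnj (v $ i) * X $$ (i, j) * v $ j) in Im q = 0 \<and> Re q \<ge> 0)"

definition ket_bra :: "nat \<Rightarrow> nat \<Rightarrow> nat \<Rightarrow> complex mat" where
  "ket_bra d k l = mat d d (\<lambda>(a, b). if a = k \<and> b = l then 1 else 0)"

text \<open>(Phi tensor I_n) applied to a (d*n) x (d*n) matrix, with the Kronecker index
  convention |i> tensor |k> = basis vector i*n+k.\<close>
definition tensor_id_apply :: "(complex mat \<Rightarrow> complex mat) \<Rightarrow> nat \<Rightarrow> nat \<Rightarrow> complex mat \<Rightarrow> complex mat" where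
  "tensor_id_apply \<Phi> d n X =
     mat (d * n) (d * n) (\<lambda>(p, q).
        let i = p div n; k = p mod n; j = q div n; l = q mod n;
            M = mat d d (\<lambda>(a, b). X $$ (a * n + k, b * n + l))
        in \<Phi> M $$ (i, j))"

text \<open>Quantum channel on d x d matrices: linear, completely positive, trace preserving.\<close>
definition quantum_channel :: "nat \<Rightarrow> (complex mat \<Rightarrow> complex mat) \<Rightarrow> bool" where
  "quantum_channel d \<Phi> \<longleftrightarrow>
     (\<forall>A \<in> carrier_mat d d. \<Phi> A \<in> carrier_mat d d) \<and>
     (\<forall>A \<in> carrier_mat d d. \<forall>B \<in> carrier_mat d d. \<Phi> (A + B) = \<Phi> A + \<Phi> B) \<and>
     (\<forall>A \<in> carrier_mat d d. \<forall>c. \<Phi> (c \<cdot>\<^sub>m A) = c \<cdot>\<^sub>m \<Phi> A) \<and>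
     (\<forall>A \<in> carrier_mat d d. (\<Sum>i<d. \<Phi> A $$ (i, i)) = (\<Sum>i<d. A $$ (i, i))) \<and>
     (\<forall>n X. psd_mat (d * n) X \<longrightarrow> psd_mat (d * n) (tensor_id_apply \<Phi> d n X))"

text \<open>|Omega><Omega| with |Omega> = sum_i |ii>.\<close>
definition omega_proj :: "nat \<Rightarrow> complex mat" where
  "omega_proj d = mat (d * d) (d * d)
     (\<lambda>(p, q). if p div d = p mod d \<and> q div d = q mod d then 1 else 0)"

definition jamiolkowski :: "nat \<Rightarrow> (complex mat \<Rightarrow> complex mat) \<Rightarrow> complex mat" where
  "jamiolkowski d \<Phi> = (1 / of_nat d) \<cdot>\<^sub>m tensor_id_apply \<Phi> d d (omega_proj d)"

definition classical_action_is :: "nat \<Rightarrow> (complex mat \<Rightarrow> complex mat) \<Rightarrow> real mat \<Rightarrow> bool" where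
  "classical_action_is d \<Phi> T \<longleftrightarrow> T \<in> carrier_mat d d \<and>
     (\<forall>i < d. \<forall>j < d. \<Phi> (ket_bra d j j) $$ (i, i) = complex_of_real (T $$ (i, j)))"

definition column_stochastic :: "nat \<Rightarrow> real mat \<Rightarrow> bool" where
  "column_stochastic d T \<longleftrightarrow> T \<in> carrier_mat d d \<and>
     (\<forall>i < d. \<forall>j < d. T $$ (i, j) \<ge> 0) \<and> (\<forall>j < d. (\<Sum>i<d. T $$ (i, j)) = 1)"

definition eigvals_desc :: "complex mat \<Rightarrow> real list" where
  "eigvals_desc X = (THE l. length l = dim_row X \<and> sorted_wrt (\<ge>) l \<and>
      char_poly X = prod_list (map (\<lambda>e. [:- complex_of_real e, 1:]) l))"

definition majorizes :: "real list \<Rightarrow> real list \<Rightarrow> bool" where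
  "majorizes x y \<longleftrightarrow> length x = length y \<and>
     (\<forall>k \<in> {1..length x}. sum_list (take k (rev (sort x))) \<ge> sum_list (take k (rev (sort y))))"

text \<open>s^(i)(T) in R^{d^2} (entries indexed from 0): first n_i entries 1,
  entry n_i equal to a_i, remaining 0, where row sum = n_i + a_i.\<close>
definition s_vec :: "nat \<Rightarrow> real mat \<Rightarrow> nat \<Rightarrow> real list" where
  "s_vec d T i =
     (let r = (\<Sum>j<d. T $$ (i, j)); n = nat \<lfloor>r\<rfloor>; a = r - of_int \<lfloor>r\<rfloor>
      in map (\<lambda>p. if p < n then 1 else if p = n then a else 0) [0..<d * d])"

definition mu_maj :: "nat \<Rightarrow> real mat \<Rightarrow> real list" where
  "mu_maj d T = map (\<lambda>p. (1 / real d) * (\<Sum>i<d. s_vec d T i ! p)) [0..<d * d]"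

end

theory Submission
  imports Defs "Jordan_Normal_Form.Schur_Decomposition"
begin

declare corthogonal_matD[rule del] corthogonal_matI[rule del] corthogonalD[rule del] corthogonalI[rule del]

definition adj :: "complex mat \<Rightarrow> complex mat" where
  "adj A = mat (dim_col A) (dim_row A) (\<lambda>(i,j). cnj (A $$ (j,i)))"
lemma adj_dims[simp]: "dim_row (adj A) = dim_col A" "dim_col (adj A) = dim_row A"
  unfolding adj_def by simp_all
lemma adj_carrier[simp]: "A \<in> carrier_mat n m \<Longrightarrow> adj A \<in> carrier_mat m n"
  unfolding carrier_mat_def by simp
lemma adj_index[simp]: "i < dim_col A \<Longrightarrow> j < dim_row A \<Longrightarrow> adj A $$ (i,j) = cnj (A $$ (j,i))"
  unfolding adj_def by simp
lemma adj_adj[simp]: "adj (adj A) = A"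
  by (rule eq_matI, simp_all)

lemma adj_mult: assumes "A \<in> carrier_mat n k" "B \<in> carrier_mat k m"
  shows "adj (A * B) = adj B * adj A"
proof (rule eq_matI)
  fix i j assume i: "i < dim_row (adj B * adj A)" and j: "j < dim_col (adj B * adj A)"
  then have i': "i < m" and j': "j < n" using assms by auto
  have "adj (A * B) $$ (i, j) = cnj ((A * B) $$ (j, i))" using assms i' j' by auto
  also have "\<dots> = cnj (\<Sum>t\<in>{0..<k}. A $$ (j,t) * B $$ (t,i))"
    using assms i' j' by (simp add: scalar_prod_def)
  also have "\<dots> = (\<Sum>t\<in>{0..<k}. adj B $$ (i,t) * adj A $$ (t,j))"
    unfolding cnj_sum using assms i' j' by (intro sum.cong) (auto simp: mult.commute)
  also have "\<dots> = (adj B * adj A) $$ (i, j)"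
    using assms i' j' by (simp add: scalar_prod_def)
  finally show "adj (A * B) $$ (i, j) = (adj B * adj A) $$ (i, j)" .
qed (use assms in simp_all)

lemma adj_one[simp]: "adj (1\<^sub>m n) = 1\<^sub>m n"
  by (rule eq_matI, simp_all)

lemma adj_zero[simp]: "adj (0\<^sub>m n m) = 0\<^sub>m m n"
  by (rule eq_matI, simp_all)

lemma adj_four_block: assumes "A \<in> carrier_mat n1 m1" "B \<in> carrier_mat n1 m2"
  "C \<in> carrier_mat n2 m1" "D \<in> carrier_mat n2 m2"
  shows "adj (four_block_mat A B C D) = four_block_mat (adj A) (adj C) (adj B) (adj D)"
  by (rule eq_matI, insert assms, auto)

definition rdiag :: "real list \<Rightarrow> complex mat" where
  "rdiag l = mat (length l) (length l) (\<lambda>(i,j). if i = j then complex_of_real (l ! i) else 0)"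

lemma rdiag_carrier[simp]: "rdiag l \<in> carrier_mat (length l) (length l)"
  unfolding rdiag_def carrier_mat_def by simp

lemma rdiag_Cons: "rdiag (x # l) = four_block_mat (mat 1 1 (\<lambda>_. complex_of_real x))
   (0\<^sub>m 1 (length l)) (0\<^sub>m (length l) 1) (rdiag l)"
  by (rule eq_matI, auto simp: rdiag_def nth_Cons')

lemma adj_rdiag[simp]: "adj (rdiag l) = rdiag l"
  by (rule eq_matI, simp_all add: rdiag_def)

lemma cscalar_self_real: fixes w :: "complex vec"
  shows "w \<bullet>c w = complex_of_real (Re (w \<bullet>c w)) \<and> Re (w \<bullet>c w) \<ge> 0"
proof -
  have "w \<bullet>c w \<ge> 0" by (rule conjugate_square_ge_0_vec)
  then show ?thesis by (auto simp: less_eq_complex_def complex_eq_iff)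
qed

lemma hermitian_spectral:
  fixes A :: "complex mat"
  assumes "A \<in> carrier_mat n n" "adj A = A"
  shows "\<exists>U l. U \<in> carrier_mat n n \<and> length l = n \<and> adj U * U = 1\<^sub>m n \<and> A = U * rdiag l * adj U"
  using assms
proof (induction n arbitrary: A)
  case 0
  show ?case
    by (rule exI[of _ "1\<^sub>m 0"], rule exI[of _ "[]"], insert 0(1), auto intro!: eq_matI)
next
  case (Suc m)
  define n where "n = Suc m"
  have A: "A \<in> carrier_mat n n" and herm: "adj A = A" using Suc n_def by auto
  obtain es where es: "char_poly A = (\<Prod>a\<leftarrow>es. [:- a, 1:])" "length es = n"
    using char_poly_factorized[OF A] by blast
  then obtain e es' where ees: "es = e # es'" unfolding n_def by (cases es, auto)
  have "poly (char_poly A) e = 0" unfolding es ees by simp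
  then have "eigenvalue A e" using eigenvalue_root_char_poly[OF A] by simp
  then obtain v where "eigenvector A v e" unfolding eigenvalue_def by blast
  then have v: "v \<in> carrier_vec n" and v0: "v \<noteq> 0\<^sub>v n" and Av: "A *\<^sub>v v = e \<cdot>\<^sub>v v"
    using A unfolding eigenvector_def by auto
  interpret cof_vec_space n "TYPE(complex)" .
  define b where "b = basis_completion v"
  note bc = basis_completion[OF v v0, folded b_def]
  define ws where "ws = gram_schmidt n b"
  note gs = gram_schmidt_result[OF bc(2) bc(4) bc(5) ws_def]
  have lws: "length ws = n" using gs(4) bc(6) by simp
  obtain vs where bv: "b = v # vs" using bc(6,7) unfolding n_def by (cases b, auto)
  have "hd ws = v" unfolding ws_def bv using gram_schmidt_hd[OF v] by simp
  then have ws0: "ws ! 0 = v" using lws hd_conv_nth[of ws] unfolding n_def by fastforce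
  have wsc: "i < n \<Longrightarrow> ws ! i \<in> carrier_vec n" for i using gs(3) lws by auto
  define nr where "nr i = Re (ws ! i \<bullet>c ws ! i)" for i
  have nr: "ws ! i \<bullet>c ws ! i = complex_of_real (nr i)" for i
    using cscalar_self_real unfolding nr_def by metis
  have nrpos: "nr i > 0" if i: "i < n" for i
  proof -
    have "ws ! i \<bullet>c ws ! i \<noteq> 0" using gs(2) i lws unfolding corthogonal_def by auto
    moreover have "nr i \<ge> 0" using cscalar_self_real unfolding nr_def by metis
    ultimately show ?thesis using nr[of i] by (cases "nr i = 0", auto)
  qed
  have orth: "i < n \<Longrightarrow> j < n \<Longrightarrow> i \<noteq> j \<Longrightarrow> ws ! i \<bullet>c ws ! j = 0" for i j
    using gs(2) lws unfolding corthogonal_def by auto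
  define c where "c i = 1 / sqrt (nr i)" for i
  define W where "W = mat n n (\<lambda>(p,i). complex_of_real (c i) * (ws ! i $ p))"
  have W: "W \<in> carrier_mat n n" unfolding W_def by simp
  have WW: "adj W * W = 1\<^sub>m n"
  proof (rule eq_matI)
    fix i j assume i: "i < dim_row (1\<^sub>m n)" and j: "j < dim_col (1\<^sub>m n)"
    then have i: "i < n" and j: "j < n" by auto
    have "(adj W * W) $$ (i,j) = (\<Sum>p\<in>{0..<n}. cnj (W $$ (p,i)) * W $$ (p,j))"
      using W i j by (simp add: scalar_prod_def)
    also have "\<dots> = complex_of_real (c i * c j) * (\<Sum>p\<in>{0..<n}. (ws ! j $ p) * cnj (ws ! i $ p))"
      unfolding sum_distrib_left using i j by (intro sum.cong, auto simp: W_def)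
    also have "(\<Sum>p\<in>{0..<n}. (ws ! j $ p) * cnj (ws ! i $ p)) = ws ! j \<bullet>c ws ! i"
      using wsc[OF i] wsc[OF j] by (simp add: scalar_prod_def)
    also have "complex_of_real (c i * c j) * \<dots> = 1\<^sub>m n $$ (i,j)"
    proof (cases "i = j")
      case True
      have "c i * c i * nr i = 1" using nrpos[OF i] unfolding c_def
        by (simp add: field_simps)
      then show ?thesis using True i nr[of i] by (simp del: of_real_mult add: of_real_mult[symmetric])
    next
      case False
      then show ?thesis using orth[OF j i] i j by simp
    qed
    finally show "(adj W * W) $$ (i,j) = 1\<^sub>m n $$ (i,j)" .
  qed (use W in auto)
  have WW': "W * adj W = 1\<^sub>m n"
    using mat_mult_left_right_inverse[OF adj_carrier[OF W] W WW] .
  have colW: "col W 0 = complex_of_real (c 0) \<cdot>\<^sub>v v"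
    by (rule eq_vecI, insert v ws0, auto simp: W_def n_def)
  have colAW: "col (A * W) 0 = e \<cdot>\<^sub>v col W 0"
    unfolding col_mult2[OF A W, of 0, unfolded n_def, OF zero_less_Suc, folded n_def] colW
    using v Av by (simp add: mult_mat_vec[OF A] smult_smult_assoc mult.commute)
  define A' where "A' = adj W * A * W"
  have A': "A' \<in> carrier_mat n n" unfolding A'_def using A W by auto
  have A'eq: "A' = adj W * (A * W)" unfolding A'_def using A W by (simp add: assoc_mult_mat[of _ n n])
  have hA': "adj A' = A'"
  proof -
    have "adj A' = adj (A * W) * adj (adj W)" unfolding A'eq
      by (rule adj_mult[of _ n n]) (use A W in auto)
    also have "adj (A * W) = adj W * adj A" by (rule adj_mult[of _ n n]) (use A W in auto)
    finally show ?thesis unfolding herm adj_adj A'_def .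
  qed
  have A'c0: "A' $$ (i,0) = (if i = 0 then e else 0)" if i: "i < n" for i
  proof -
    have "A' $$ (i,0) = row (adj W) i \<bullet> col (A * W) 0"
      unfolding A'eq using i A W by (simp add: n_def)
    also have "\<dots> = e * (row (adj W) i \<bullet> col W 0)" unfolding colAW using W by simp
    also have "row (adj W) i \<bullet> col W 0 = (adj W * W) $$ (i,0)" using i W by (simp add: n_def)
    finally show ?thesis unfolding WW using i by (simp add: n_def)
  qed
  have A'r0: "A' $$ (0,j) = (if j = 0 then cnj e else 0)" if j: "j < n" for j
  proof -
    have "A' $$ (0,j) = adj A' $$ (0,j)" using hA' by simp
    also have "\<dots> = cnj (A' $$ (j,0))" using A' j by (simp add: n_def)
    finally show ?thesis using A'c0[OF j] by simp
  qed
  have ce: "cnj e = e"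
    using A'c0[of 0] A'r0[of 0] unfolding n_def by simp
  have ereal: "complex_of_real (Re e) = e"
    using ce by (simp add: complex_eq_iff)
  define A3 where "A3 = mat m m (\<lambda>(i,j). A' $$ (Suc i, Suc j))"
  have A3: "A3 \<in> carrier_mat m m" unfolding A3_def by simp
  have hA3: "adj A3 = A3"
  proof (rule eq_matI)
    fix i j assume "i < dim_row A3" "j < dim_col A3"
    then have i: "i < m" and j: "j < m" using A3 by auto
    have "adj A3 $$ (i,j) = cnj (A' $$ (Suc j, Suc i))" using i j by (simp add: A3_def)
    also have "\<dots> = adj A' $$ (Suc i, Suc j)" using i j A' by (simp add: n_def)
    finally show "adj A3 $$ (i,j) = A3 $$ (i,j)" using hA' i j by (simp add: A3_def)
  qed (use A3 in auto)
  obtain U3 l3 where U3: "U3 \<in> carrier_mat m m" "length l3 = m" "adj U3 * U3 = 1\<^sub>m m"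
    "A3 = U3 * rdiag l3 * adj U3" using Suc.IH[OF A3 hA3] by blast
  define X where "X = mat 1 1 (\<lambda>_. complex_of_real (Re e))"
  have X: "X \<in> carrier_mat 1 1" unfolding X_def by simp
  have A'blk: "A' = four_block_mat X (0\<^sub>m 1 m) (0\<^sub>m m 1) A3"
  proof (rule eq_matI)
    fix i j assume "i < dim_row (four_block_mat X (0\<^sub>m 1 m) (0\<^sub>m m 1) A3)"
      "j < dim_col (four_block_mat X (0\<^sub>m 1 m) (0\<^sub>m m 1) A3)"
    then have i: "i < n" and j: "j < n" using X A3 by (auto simp: n_def)
    show "A' $$ (i,j) = four_block_mat X (0\<^sub>m 1 m) (0\<^sub>m m 1) A3 $$ (i,j)"
    proof (cases "i = 0")
      case True
      then show ?thesis using A'r0[OF j] j X A3 ereal ce by (auto simp: X_def n_def)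
    next
      case False
      note i0 = this
      show ?thesis
      proof (cases "j = 0")
        case True
        then show ?thesis using A'c0[OF i] i i0 X A3 by (auto simp: n_def)
      next
        case False
        then obtain i' j' where "i = Suc i'" "j = Suc j'" using i0 by (cases i; cases j, auto)
        then show ?thesis using i j X A3 by (auto simp: A3_def n_def)
      qed
    qed
  qed (use X A3 A' in \<open>auto simp: n_def\<close>)
  define F where "F = four_block_mat (1\<^sub>m 1) (0\<^sub>m 1 m) (0\<^sub>m m 1) U3"
  have F: "F \<in> carrier_mat n n" unfolding F_def n_def using U3(1)
    using four_block_carrier_mat[of "1\<^sub>m 1" 1 1 U3 m m] by simp
  have one1: "(1\<^sub>m 1 :: complex mat) \<in> carrier_mat 1 1" and z1: "(0\<^sub>m 1 m :: complex mat) \<in> carrier_mat 1 m"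
    and z2: "(0\<^sub>m m 1 :: complex mat) \<in> carrier_mat m 1" by auto
  have adjF: "adj F = four_block_mat (1\<^sub>m 1) (0\<^sub>m 1 m) (0\<^sub>m m 1) (adj U3)"
    unfolding F_def adj_four_block[OF one1 z1 z2 U3(1)] by simp
  define D where "D = rdiag (Re e # l3)"
  have D: "D = four_block_mat X (0\<^sub>m 1 m) (0\<^sub>m m 1) (rdiag l3)"
    unfolding D_def rdiag_Cons X_def U3(2) ..
  have Dc: "D \<in> carrier_mat n n" unfolding D_def n_def using U3(2) by (metis rdiag_carrier length_Cons)
  have l3c: "rdiag l3 \<in> carrier_mat m m" using U3(2) rdiag_carrier by metis
  have FD: "F * D = four_block_mat X (0\<^sub>m 1 m) (0\<^sub>m m 1) (U3 * rdiag l3)"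
    unfolding F_def D mult_four_block_mat[OF one1 z1 z2 U3(1) X z1 z2 l3c] using X U3(1) l3c by simp
  have FDF: "F * D * adj F = A'"
    unfolding FD adjF A'blk U3(4)
    using mult_four_block_mat[OF X z1 z2 mult_carrier_mat[OF U3(1) l3c] one1 z1 z2 adj_carrier[OF U3(1)]]
      X U3(1) l3c by (simp add: assoc_mult_mat[of _ m m _ m _ m])
  have FF: "adj F * F = 1\<^sub>m n"
    unfolding adjF unfolding F_def mult_four_block_mat[OF one1 z1 z2 adj_carrier[OF U3(1)] one1 z1 z2 U3(1)]
    using U3(1,3) by (simp add: n_def)
  have AW: "A = W * A' * adj W"
  proof -
    have "W * A' * adj W = (W * adj W) * A * (W * adj W)"
      unfolding A'_def using W A by (simp add: assoc_mult_mat[of _ n n _ n _ n] mult_carrier_mat[of _ n n])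
    then show ?thesis unfolding WW' using A by simp
  qed
  show ?case
  proof (intro exI conjI)
    show "W * F \<in> carrier_mat (Suc m) (Suc m)" using W F by (auto simp: n_def)
    show "length (Re e # l3) = Suc m" using U3 by simp
    show "adj (W * F) * (W * F) = 1\<^sub>m (Suc m)"
    proof -
      have "adj (W * F) * (W * F) = adj F * (adj W * W) * F"
        using W F by (simp add: adj_mult[of _ n n] assoc_mult_mat[of _ n n _ n _ n] mult_carrier_mat[of _ n n])
      then show ?thesis using WW FF F by (simp add: n_def[symmetric])
    qed
    show "A = W * F * rdiag (Re e # l3) * adj (W * F)"
      unfolding AW FDF[symmetric] D_def[symmetric] using W F Dc
      by (simp add: adj_mult[of _ n n] assoc_mult_mat[of _ n n _ n _ n] mult_carrier_mat[of _ n n])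
  qed
qed

lemma prod_list_map_mset: "mset a = mset b \<Longrightarrow> prod_list (map (f :: _ \<Rightarrow> _ :: comm_monoid_mult) a) = prod_list (map f b)"
proof -
  assume "mset a = mset b"
  then have "mset (map f a) = mset (map f b)" by simp
  then show ?thesis by (metis prod_mset_prod_list)
qed

lemma prod_lin_mset:
  "(\<Prod>a\<leftarrow>xs. [:- a, 1:]) = (\<Prod>a\<leftarrow>ys. [:- (a::complex), 1:]) \<Longrightarrow> mset xs = mset ys"
proof (induction xs arbitrary: ys)
  case Nil
  show ?case
  proof (cases ys)
    case (Cons y ys')
    have "poly (\<Prod>a\<leftarrow>ys. [:- a, 1:]) y = 0" unfolding Cons by simp
    then show ?thesis using Nil by simp
  qed simp
next
  case (Cons x xs)
  have "poly (\<Prod>a\<leftarrow>ys. [:- a, 1:]) x = 0" unfolding Cons(2)[symmetric] by simp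
  then have "0 \<in> set (map (\<lambda>p. poly p x) (map (\<lambda>a. [:- a, 1:]) ys))"
    by (simp add: poly_prod_list prod_list_zero_iff)
  then have x: "x \<in> set ys" by auto
  then have m: "mset ys = mset (x # remove1 x ys)" by simp
  have "[:- x, 1:] * (\<Prod>a\<leftarrow>xs. [:- a, 1:]) = [:- x, 1:] * (\<Prod>a\<leftarrow>remove1 x ys. [:- a, 1:])"
    using Cons(2) prod_list_map_mset[OF m, of "\<lambda>a. [:- a, 1:]"] by simp
  then have "(\<Prod>a\<leftarrow>xs. [:- a, 1:]) = (\<Prod>a\<leftarrow>remove1 x ys. [:- a, 1:])"
    by (subst (asm) mult_left_cancel, auto)
  from Cons(1)[OF this] have "mset xs = mset (remove1 x ys)" .
  then show ?case using m by (metis mset.simps(2))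
qed

lemma eigvals_desc_char:
  assumes A: "A \<in> carrier_mat n n" and len: "length l = n"
    and cp: "char_poly A = (\<Prod>e\<leftarrow>l. [:- complex_of_real e, 1:])"
  shows "eigvals_desc A = rev (sort l)"
  unfolding eigvals_desc_def
proof (rule the_equality)
  have m: "mset (rev (sort l)) = mset l" by simp
  show "length (rev (sort l)) = dim_row A \<and> sorted_wrt (\<ge>) (rev (sort l)) \<and>
    char_poly A = (\<Prod>e\<leftarrow>rev (sort l). [:- complex_of_real e, 1:])"
    using A len cp prod_list_map_mset[OF m, of "\<lambda>e. [:- complex_of_real e, 1:]"]
    by (simp add: sorted_wrt_rev)
next
  fix l' assume "length l' = dim_row A \<and> sorted_wrt (\<ge>) l' \<and>
    char_poly A = (\<Prod>e\<leftarrow>l'. [:- complex_of_real e, 1:])"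
  then have s: "sorted_wrt (\<ge>) l'" and cp': "char_poly A = (\<Prod>e\<leftarrow>l'. [:- complex_of_real e, 1:])"
    by auto
  have "(\<Prod>a\<leftarrow>map complex_of_real l'. [:- a, 1:]) = (\<Prod>a\<leftarrow>map complex_of_real l. [:- a, 1:])"
    using cp cp' by (simp add: o_def)
  from prod_lin_mset[OF this] have "mset (map complex_of_real l') = mset (map complex_of_real l)" .
  then have "image_mset Re (mset (map complex_of_real l')) = image_mset Re (mset (map complex_of_real l))"
    by simp
  then have ml: "mset (rev l') = mset l" by (simp add: multiset.map_comp o_def)
  have "sorted (rev l')" using s by (simp add: sorted_wrt_rev)
  from properties_for_sort[OF ml this] show "l' = rev (sort l)" by simp
qed

lemma sum_blocks: fixes n k :: nat shows "(\<Sum>p<n * k. F p) = (\<Sum>a<n. \<Sum>j<k. F (a * k + j))"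
proof (induction n)
  case (Suc n)
  have "(\<Sum>p<Suc n * k. F p) = (\<Sum>p<n * k. F p) + (\<Sum>p\<in>{n*k..<n*k+k}. F p)"
    by (simp add: add.commute sum.atLeastLessThan_concat[symmetric] lessThan_atLeast0)
  also have "(\<Sum>p\<in>{n*k..<n*k+k}. F p) = (\<Sum>j\<in>{0..<k}. F (j + n * k))"
    using sum.shift_bounds_nat_ivl[of F 0 "n*k" k] by (simp add: add.commute)
  also have "\<dots> = (\<Sum>j<k. F (n * k + j))"
    by (simp add: lessThan_atLeast0 add.commute)
  finally show ?case using Suc by simp
qed simp

lemma rdiag_right: assumes U: "U \<in> carrier_mat n n" and l: "length l = n" and p: "p < n" and t: "t < n"
  shows "(U * rdiag l) $$ (p, t) = U $$ (p, t) * complex_of_real (l ! t)"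
proof -
  have "(U * rdiag l) $$ (p, t) = (\<Sum>s\<in>{0..<n}. U $$ (p, s) * rdiag l $$ (s, t))"
    using U l p t by (simp add: scalar_prod_def rdiag_def)
  also have "\<dots> = (\<Sum>s\<in>{0..<n}. if s = t then U $$ (p, t) * complex_of_real (l ! t) else 0)"
    using l t by (intro sum.cong) (simp_all add: rdiag_def)
  also have "\<dots> = U $$ (p, t) * complex_of_real (l ! t)" using t by simp
  finally show ?thesis .
qed

lemma spectral_facts:
  fixes A :: "complex mat"
  assumes A: "A \<in> carrier_mat n n" and h: "adj A = A"
  obtains U l where "U \<in> carrier_mat n n" "length l = n"
    "\<And>i j. i < n \<Longrightarrow> j < n \<Longrightarrow> (\<Sum>p<n. cnj (U $$ (p,i)) * U $$ (p,j)) = (if i = j then 1 else 0)"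
    "\<And>p q. p < n \<Longrightarrow> q < n \<Longrightarrow> A $$ (p,q) = (\<Sum>m<n. U $$ (p,m) * complex_of_real (l ! m) * cnj (U $$ (q,m)))"
    "char_poly A = (\<Prod>e\<leftarrow>l. [:- complex_of_real e, 1:])"
proof -
  obtain U l where U: "U \<in> carrier_mat n n" and l: "length l = n" and UU: "adj U * U = 1\<^sub>m n"
    and AU: "A = U * rdiag l * adj U" using hermitian_spectral[OF A h] by blast
  have UU': "U * adj U = 1\<^sub>m n" using mat_mult_left_right_inverse[OF adj_carrier[OF U] U UU] .
  have R: "rdiag l \<in> carrier_mat n n" using l rdiag_carrier by metis
  show ?thesis
  proof
    show "U \<in> carrier_mat n n" "length l = n" by fact+
  next
    fix i j assume i: "i < n" and j: "j < n"
    have "(adj U * U) $$ (i,j) = (\<Sum>p\<in>{0..<n}. cnj (U $$ (p,i)) * U $$ (p,j))"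
      using U i j by (simp add: scalar_prod_def)
    then show "(\<Sum>p<n. cnj (U $$ (p,i)) * U $$ (p,j)) = (if i = j then 1 else 0)"
      unfolding UU using i j by (simp add: lessThan_atLeast0)
  next
    fix p q assume p: "p < n" and q: "q < n"
    have "A $$ (p,q) = (\<Sum>t\<in>{0..<n}. (U * rdiag l) $$ (p,t) * adj U $$ (t,q))"
      unfolding AU using U R p q by (simp add: scalar_prod_def)
    also have "\<dots> = (\<Sum>t\<in>{0..<n}. U $$ (p,t) * complex_of_real (l ! t) * cnj (U $$ (q,t)))"
      using U q p l by (intro sum.cong) (simp_all add: rdiag_right)
    finally show "A $$ (p,q) = (\<Sum>m<n. U $$ (p,m) * complex_of_real (l ! m) * cnj (U $$ (q,m)))"
      by (simp add: lessThan_atLeast0)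
  next
    have "similar_mat_wit A (rdiag l) U (adj U)"
      unfolding similar_mat_wit_def Let_def using A U R UU UU' AU by auto
    then have "char_poly A = char_poly (rdiag l)"
      by (intro char_poly_similar) (auto simp: similar_mat_def)
    also have "\<dots> = (\<Prod>a\<leftarrow>diag_mat (rdiag l). [:- a, 1:])"
      by (rule char_poly_upper_triangular[OF R]) (simp add: upper_triangular_def rdiag_def)
    also have "diag_mat (rdiag l) = map complex_of_real l"
      by (rule nth_equalityI) (simp_all add: diag_mat_def rdiag_def)
    finally show "char_poly A = (\<Prod>e\<leftarrow>l. [:- complex_of_real e, 1:])" by (simp add: o_def)
  qed
qed

definition qf :: "complex mat \<Rightarrow> nat \<Rightarrow> complex vec \<Rightarrow> complex" where
  "qf X n v = (\<Sum>i<n. \<Sum>j<n. cnj (v $ i) * X $$ (i, j) * v $ j)"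

lemma psd_matD: "psd_mat n X \<Longrightarrow> v \<in> carrier_vec n \<Longrightarrow> Im (qf X n v) = 0 \<and> Re (qf X n v) \<ge> 0"
  unfolding psd_mat_def qf_def Let_def by blast

lemma psd_matI: "X \<in> carrier_mat n n \<Longrightarrow> (\<And>v. v \<in> carrier_vec n \<Longrightarrow> Im (qf X n v) = 0 \<and> Re (qf X n v) \<ge> 0)
  \<Longrightarrow> psd_mat n X"
  unfolding psd_mat_def qf_def Let_def by blast

lemma block_index: fixes a k d :: nat assumes "a < d" "k < d"
  shows "a * d + k < d * d" "(a * d + k) div d = a" "(a * d + k) mod d = k"
proof -
  have "a * d + k < a * d + d" using assms by simp
  also have "\<dots> = (a + 1) * d" by simp
  also have "\<dots> \<le> d * d" using assms by (intro mult_right_mono) auto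
  finally show "a * d + k < d * d" .
  show "(a * d + k) div d = a" "(a * d + k) mod d = k" using assms by auto
qed

lemma J_index: assumes d: "d \<ge> 1" and p: "p < d * d" and q: "q < d * d"
  shows "jamiolkowski d \<Phi> $$ (p, q) = (1 / of_nat d) * \<Phi> (ket_bra d (p mod d) (q mod d)) $$ (p div d, q div d)"
proof -
  have pk: "p mod d < d" "q mod d < d" using d by auto
  have M: "mat d d (\<lambda>(a, b). omega_proj d $$ (a * d + p mod d, b * d + q mod d)) = ket_bra d (p mod d) (q mod d)"
  proof (rule eq_matI)
    fix a b assume "a < dim_row (ket_bra d (p mod d) (q mod d))" "b < dim_col (ket_bra d (p mod d) (q mod d))"
    then have a: "a < d" and b: "b < d" by (auto simp: ket_bra_def)
    note ba = block_index[OF a pk(1)] and bb = block_index[OF b pk(2)]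
    show "mat d d (\<lambda>(a, b). omega_proj d $$ (a * d + p mod d, b * d + q mod d)) $$ (a, b) =
      ket_bra d (p mod d) (q mod d) $$ (a, b)"
      using a b ba bb by (simp add: omega_proj_def ket_bra_def)
  qed (auto simp: ket_bra_def)
  show ?thesis unfolding jamiolkowski_def tensor_id_apply_def
    using p q by (simp add: Let_def M)
qed

lemma J_carrier: "jamiolkowski d \<Phi> \<in> carrier_mat (d * d) (d * d)"
  unfolding jamiolkowski_def tensor_id_apply_def by simp

lemma omega_psd: "psd_mat (d * d) (omega_proj d)"
proof (rule psd_matI)
  show "omega_proj d \<in> carrier_mat (d * d) (d * d)" unfolding omega_proj_def by simp
next
  fix v :: "complex vec" assume v: "v \<in> carrier_vec (d * d)"
  define P where "P i = (i div d = i mod d)" for i :: nat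
  define s where "s = (\<Sum>j<d*d. if P j then v $ j else 0)"
  have "qf (omega_proj d) (d * d) v = (\<Sum>i<d*d. \<Sum>j<d*d. (if P i then cnj (v $ i) else 0) * (if P j then v $ j else 0))"
    unfolding qf_def by (intro sum.cong refl) (simp add: omega_proj_def P_def)
  also have "\<dots> = (\<Sum>i<d*d. if P i then cnj (v $ i) else 0) * s"
    unfolding s_def by (simp add: sum_product)
  also have "(\<Sum>i<d*d. if P i then cnj (v $ i) else 0) = cnj s"
    unfolding s_def cnj_sum by (intro sum.cong) auto
  also have "cnj s * s = complex_of_real ((cmod s)\<^sup>2)" using complex_norm_square[of s] by (simp only: mult.commute)
  finally show "Im (qf (omega_proj d) (d * d) v) = 0 \<and> 0 \<le> Re (qf (omega_proj d) (d * d) v)" by simp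
qed

lemma qf_smult: assumes X: "X \<in> carrier_mat n n"
  shows "qf (c \<cdot>\<^sub>m X) n v = c * qf X n v"
  unfolding qf_def sum_distrib_left using X by (intro sum.cong refl) (simp add: mult.commute mult.left_commute)

lemma J_psd: assumes "d \<ge> 1" and Q: "quantum_channel d \<Phi>"
  shows "psd_mat (d * d) (jamiolkowski d \<Phi>)"
proof -
  have T: "psd_mat (d * d) (tensor_id_apply \<Phi> d d (omega_proj d))"
    using Q omega_psd unfolding quantum_channel_def by blast
  have Tc: "tensor_id_apply \<Phi> d d (omega_proj d) \<in> carrier_mat (d * d) (d * d)"
    unfolding tensor_id_apply_def by simp
  show ?thesis
  proof (rule psd_matI)
    show "jamiolkowski d \<Phi> \<in> carrier_mat (d * d) (d * d)" by (rule J_carrier)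
  next
    fix v :: "complex vec" assume v: "v \<in> carrier_vec (d * d)"
    have e: "(1 / of_nat d :: complex) = complex_of_real (1 / real d)" by simp
    have "qf (jamiolkowski d \<Phi>) (d * d) v = complex_of_real (1 / real d) * qf (tensor_id_apply \<Phi> d d (omega_proj d)) (d * d) v"
      unfolding jamiolkowski_def qf_smult[OF Tc] e ..
    then show "Im (qf (jamiolkowski d \<Phi>) (d * d) v) = 0 \<and> 0 \<le> Re (qf (jamiolkowski d \<Phi>) (d * d) v)"
      using psd_matD[OF T v] by simp
  qed
qed

lemma sum_two_delta: fixes g :: "nat \<Rightarrow> complex"
  assumes "i < n" "j < n" "i \<noteq> j"
  shows "(\<Sum>t<n. g t * ((if t = i then a else 0) + (if t = j then b else 0))) = g i * a + g j * b"
proof -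
  have "(\<Sum>t<n. g t * ((if t = i then a else 0) + (if t = j then b else 0)))
     = (\<Sum>t<n. (if t = i then g t * a else 0)) + (\<Sum>t<n. (if t = j then g t * b else 0))"
    unfolding sum.distrib[symmetric] by (intro sum.cong) (auto simp: distrib_left distrib_right)
  then show ?thesis using assms by simp
qed

lemma sum_two_delta': fixes g :: "nat \<Rightarrow> complex"
  assumes "i < n" "j < n" "i \<noteq> j"
  shows "(\<Sum>t<n. cnj ((if t = i then a else 0) + (if t = j then b else 0)) * g t) = cnj a * g i + cnj b * g j"
proof -
  have "(\<Sum>t<n. cnj ((if t = i then a else 0) + (if t = j then b else 0)) * g t)
     = (\<Sum>t<n. (if t = i then cnj a * g t else 0)) + (\<Sum>t<n. (if t = j then cnj b * g t else 0))"
    unfolding sum.distrib[symmetric] by (intro sum.cong) (auto simp: distrib_left distrib_right)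
  then show ?thesis using assms by simp
qed

lemma qf_two: assumes X: "X \<in> carrier_mat n n" and ij: "i < n" "j < n" "i \<noteq> j"
  shows "qf X n (vec n (\<lambda>t. (if t = i then a else 0) + (if t = j then b else 0))) =
    cnj a * (X $$ (i,i) * a + X $$ (i,j) * b) + cnj b * (X $$ (j,i) * a + X $$ (j,j) * b)"
proof -
  let ?f = "\<lambda>t. (if t = i then a else 0) + (if t = j then b else 0)"
  have "qf X n (vec n ?f) = (\<Sum>s<n. cnj (?f s) * (\<Sum>t<n. X $$ (s,t) * ?f t))"
    unfolding qf_def sum_distrib_left by (intro sum.cong refl) (simp add: mult.assoc)
  also have "\<dots> = (\<Sum>s<n. cnj (?f s) * (X $$ (s,i) * a + X $$ (s,j) * b))"
    by (intro sum.cong refl, subst sum_two_delta[OF ij], rule refl)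
  also have "\<dots> = cnj a * (X $$ (i,i) * a + X $$ (i,j) * b) + cnj b * (X $$ (j,i) * a + X $$ (j,j) * b)"
    by (rule sum_two_delta'[OF ij])
  finally show ?thesis .
qed

lemma qf_one: assumes X: "X \<in> carrier_mat n n" and i: "i < n"
  shows "qf X n (vec n (\<lambda>t. if t = i then 1 else 0)) = X $$ (i,i)"
proof -
  have "qf X n (vec n (\<lambda>t. if t = i then 1 else 0)) = (\<Sum>s<n. (if s = i then (\<Sum>t<n. (if t = i then X $$ (s,t) else 0)) else 0))"
    unfolding qf_def by (intro sum.cong refl) (simp add: if_distrib cong: if_cong)
  then show ?thesis using i by simp
qed

lemma psd_herm: assumes P: "psd_mat n X" shows "adj X = X"
proof -
  have X: "X \<in> carrier_mat n n" using P unfolding psd_mat_def by blast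
  have diag: "Im (X $$ (i,i)) = 0" if i: "i < n" for i
    using psd_matD[OF P, of "vec n (\<lambda>t. if t = i then 1 else 0)"] qf_one[OF X i] by simp
  have off: "X $$ (i,j) = cnj (X $$ (j,i))" if ij: "i < n" "j < n" "i \<noteq> j" for i j
  proof -
    have 1: "Im (qf X n (vec n (\<lambda>t. (if t = i then 1 else 0) + (if t = j then 1 else 0)))) = 0"
      using psd_matD[OF P] by simp
    have 2: "Im (qf X n (vec n (\<lambda>t. (if t = i then 1 else 0) + (if t = j then \<i> else 0)))) = 0"
      using psd_matD[OF P] by simp
    from 1 have a: "Im (X $$ (i,j)) + Im (X $$ (j,i)) = 0"
      unfolding qf_two[OF X ij] using diag ij by simp
    from 2 have b: "Re (X $$ (i,j)) - Re (X $$ (j,i)) = 0"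
      unfolding qf_two[OF X ij] using diag ij by simp
    show ?thesis using a b by (simp add: complex_eq_iff)
  qed
  show ?thesis
  proof (rule eq_matI)
    fix i j assume "i < dim_row X" "j < dim_col X"
    then have i: "i < n" and j: "j < n" using X by auto
    show "adj X $$ (i,j) = X $$ (i,j)"
    proof (cases "i = j")
      case True then show ?thesis using diag[OF i] i X by (simp add: complex_eq_iff)
    next
      case False then show ?thesis using off[OF j i] i j X by simp
    qed
  qed (use X in auto)
qed

lemma J_trace: assumes d: "d \<ge> 1" and Q: "quantum_channel d \<Phi>" and k: "k < d" and l: "l < d"
  shows "(\<Sum>b<d. jamiolkowski d \<Phi> $$ (b * d + k, b * d + l)) = (if k = l then 1 / of_nat d else 0)"
proof -
  have "(\<Sum>b<d. jamiolkowski d \<Phi> $$ (b * d + k, b * d + l)) = (\<Sum>b<d. (1 / of_nat d) * \<Phi> (ket_bra d k l) $$ (b, b))"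
    using block_index[OF _ k] block_index[OF _ l] by (intro sum.cong refl) (simp add: J_index[OF d])
  also have "\<dots> = (1 / of_nat d) * (\<Sum>b<d. \<Phi> (ket_bra d k l) $$ (b, b))" by (simp add: sum_distrib_left)
  also have "(\<Sum>b<d. \<Phi> (ket_bra d k l) $$ (b, b)) = (\<Sum>b<d. ket_bra d k l $$ (b, b))"
    using Q unfolding quantum_channel_def by (auto simp: ket_bra_def)
  also have "\<dots> = (\<Sum>b<d. if b = k then (if k = l then 1 else 0) else 0)"
    by (intro sum.cong refl) (auto simp: ket_bra_def)
  finally show ?thesis using k by simp
qed

lemma J_diag: assumes d: "d \<ge> 1" and C: "classical_action_is d \<Phi> T" and a: "a < d" and j: "j < d"
  shows "jamiolkowski d \<Phi> $$ (a * d + j, a * d + j) = complex_of_real (T $$ (a, j) / real d)"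
  using J_index[OF d block_index(1)[OF a j] block_index(1)[OF a j]] block_index[OF a j] C a j
  unfolding classical_action_is_def by (simp add: divide_inverse mult.commute)

lemma sum_single: assumes "finite A" "b \<in> A" "\<And>a. a \<in> A \<Longrightarrow> a \<noteq> b \<Longrightarrow> f a = 0"
  shows "sum f A = f b"
proof -
  have "sum f A = f b + sum f (A - {b})" using assms by (simp add: sum.remove)
  also have "sum f (A - {b}) = 0" using assms by (intro sum.neutral) auto
  finally show ?thesis by simp
qed

lemma form_expand:
  fixes A U :: "complex mat" and l :: "real list" and \<iota> :: "nat \<Rightarrow> nat" and x :: "nat \<Rightarrow> complex"
  assumes EX: "\<And>k j. k \<in> K \<Longrightarrow> j \<in> K \<Longrightarrow> A $$ (\<iota> k, \<iota> j) = (\<Sum>m<N. U $$ (\<iota> k, m) * complex_of_real (l ! m) * cnj (U $$ (\<iota> j, m)))"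
  shows "(\<Sum>k\<in>K. \<Sum>j\<in>K. cnj (x k) * A $$ (\<iota> k, \<iota> j) * x j) =
    (\<Sum>m<N. complex_of_real (l ! m) * complex_of_real ((cmod (\<Sum>k\<in>K. cnj (x k) * U $$ (\<iota> k, m)))\<^sup>2))"
proof -
  define w where "w m = (\<Sum>k\<in>K. cnj (x k) * U $$ (\<iota> k, m))" for m
  have "(\<Sum>k\<in>K. \<Sum>j\<in>K. cnj (x k) * A $$ (\<iota> k, \<iota> j) * x j) =
    (\<Sum>k\<in>K. \<Sum>j\<in>K. \<Sum>m<N. (cnj (x k) * U $$ (\<iota> k, m)) * (complex_of_real (l ! m) * (x j * cnj (U $$ (\<iota> j, m)))))"
    by (intro sum.cong refl) (simp add: EX sum_distrib_left sum_distrib_right mult_ac)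
  also have "\<dots> = (\<Sum>k\<in>K. \<Sum>m<N. \<Sum>j\<in>K. (cnj (x k) * U $$ (\<iota> k, m)) * (complex_of_real (l ! m) * (x j * cnj (U $$ (\<iota> j, m)))))"
    by (rule sum.cong[OF refl], rule sum.swap)
  also have "\<dots> = (\<Sum>m<N. \<Sum>k\<in>K. \<Sum>j\<in>K. (cnj (x k) * U $$ (\<iota> k, m)) * (complex_of_real (l ! m) * (x j * cnj (U $$ (\<iota> j, m)))))"
    by (rule sum.swap)
  also have "\<dots> = (\<Sum>m<N. w m * (complex_of_real (l ! m) * cnj (w m)))"
    unfolding w_def cnj_sum complex_cnj_mult complex_cnj_cnj
    by (rule sum.cong[OF refl]) (simp only: sum_distrib_left sum_distrib_right, rule sum.swap)
  also have "\<dots> = (\<Sum>m<N. complex_of_real (l ! m) * complex_of_real ((cmod (w m))\<^sup>2))"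
    by (rule sum.cong[OF refl], subst complex_norm_square, simp only: mult_ac)
  finally show ?thesis unfolding w_def .
qed

context
  fixes d :: nat and \<Phi> :: "complex mat \<Rightarrow> complex mat" and T :: "real mat" and U :: "complex mat"
    and l :: "real list"
  assumes d: "d \<ge> 1" and Q: "quantum_channel d \<Phi>" and C: "classical_action_is d \<Phi> T"
    and ll: "length l = d * d"
    and ON: "\<And>i j. i < d * d \<Longrightarrow> j < d * d \<Longrightarrow> (\<Sum>p<d * d. cnj (U $$ (p,i)) * U $$ (p,j)) = (if i = j then 1 else 0)"
    and EX: "\<And>p q. p < d * d \<Longrightarrow> q < d * d \<Longrightarrow>
      jamiolkowski d \<Phi> $$ (p,q) = (\<Sum>m<d * d. U $$ (p,m) * complex_of_real (l ! m) * cnj (U $$ (q,m)))"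
begin

lemma l_nonneg: assumes m: "m < d * d" shows "l ! m \<ge> 0"
proof -
  let ?J = "jamiolkowski d \<Phi>"
  let ?x = "\<lambda>p. U $$ (p, m)"
  have "qf ?J (d * d) (vec (d * d) ?x) = (\<Sum>k\<in>{..<d * d}. \<Sum>j\<in>{..<d * d}. cnj (?x k) * ?J $$ (id k, id j) * ?x j)"
    unfolding qf_def by simp
  also have "\<dots> = (\<Sum>k<d * d. complex_of_real (l ! k) * complex_of_real ((cmod (\<Sum>p\<in>{..<d * d}. cnj (?x p) * U $$ (id p, k)))\<^sup>2))"
    by (rule form_expand) (simp add: EX)
  also have "\<dots> = (\<Sum>k<d * d. if k = m then complex_of_real (l ! k) else 0)"
    by (rule sum.cong[OF refl]) (simp add: ON m)
  also have "\<dots> = complex_of_real (l ! m)" using m by simp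
  finally have "qf ?J (d * d) (vec (d * d) ?x) = complex_of_real (l ! m)" .
  with psd_matD[OF J_psd[OF d Q], of "vec (d * d) ?x"] show ?thesis by simp
qed

definition Qb :: "nat \<Rightarrow> (nat \<Rightarrow> complex) \<Rightarrow> complex" where
  "Qb b x = (\<Sum>k<d. \<Sum>j<d. cnj (x k) * jamiolkowski d \<Phi> $$ (b * d + k, b * d + j) * x j)"

lemma Qb_psd: assumes b: "b < d" shows "Im (Qb b x) = 0 \<and> Re (Qb b x) \<ge> 0"
proof -
  let ?J = "jamiolkowski d \<Phi>"
  define y where "y = vec (d * d) (\<lambda>p. if p div d = b then x (p mod d) else 0)"
  have yv: "y $ (a * d + k) = (if a = b then x k else 0)" if "a < d" "k < d" for a k
    using block_index[OF that] unfolding y_def by simp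
  have "qf ?J (d * d) y = (\<Sum>a<d. \<Sum>k<d. \<Sum>a'<d. \<Sum>j<d. cnj (y $ (a * d + k)) * ?J $$ (a * d + k, a' * d + j) * y $ (a' * d + j))"
    unfolding qf_def sum_blocks ..
  also have "\<dots> = (\<Sum>k<d. \<Sum>a'<d. \<Sum>j<d. cnj (y $ (b * d + k)) * ?J $$ (b * d + k, a' * d + j) * y $ (a' * d + j))"
    by (rule sum_single) (auto simp: yv b)
  also have "\<dots> = (\<Sum>k<d. \<Sum>j<d. cnj (y $ (b * d + k)) * ?J $$ (b * d + k, b * d + j) * y $ (b * d + j))"
    by (rule sum.cong[OF refl], rule sum_single) (auto simp: yv b)
  also have "\<dots> = Qb b x" unfolding Qb_def by (intro sum.cong refl) (simp add: yv b)
  finally have "qf ?J (d * d) y = Qb b x" .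
  then show ?thesis using psd_matD[OF J_psd[OF d Q], of y] unfolding y_def by simp
qed

lemma Qb_total: "(\<Sum>b<d. Qb b x) = complex_of_real ((\<Sum>k<d. (cmod (x k))\<^sup>2) / real d)"
proof -
  let ?J = "jamiolkowski d \<Phi>"
  have "(\<Sum>b<d. Qb b x) = (\<Sum>k<d. \<Sum>j<d. \<Sum>b<d. cnj (x k) * ?J $$ (b * d + k, b * d + j) * x j)"
    unfolding Qb_def by (subst sum.swap, rule sum.cong[OF refl], rule sum.swap)
  also have "\<dots> = (\<Sum>k<d. \<Sum>j<d. cnj (x k) * (\<Sum>b<d. ?J $$ (b * d + k, b * d + j)) * x j)"
    by (simp add: sum_distrib_left sum_distrib_right)
  also have "\<dots> = (\<Sum>k<d. \<Sum>j<d. if j = k then cnj (x k) * x k / of_nat d else 0)"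
    by (intro sum.cong refl) (auto simp: J_trace[OF d Q])
  also have "\<dots> = (\<Sum>k<d. complex_of_real ((cmod (x k))\<^sup>2 / real d))"
    by (rule sum.cong[OF refl], subst of_real_divide, subst complex_norm_square, simp add: mult.commute)
  finally show ?thesis by (simp add: sum_divide_distrib)
qed

lemma Qb_le: assumes a: "a < d" shows "Re (Qb a x) \<le> (\<Sum>k<d. (cmod (x k))\<^sup>2) / real d"
proof -
  have "Re (Qb a x) \<le> (\<Sum>b<d. Re (Qb b x))"
    by (rule member_le_sum) (use a Qb_psd in auto)
  also have "\<dots> = Re (\<Sum>b<d. Qb b x)" by simp
  also have "\<dots> = (\<Sum>k<d. (cmod (x k))\<^sup>2) / real d" unfolding Qb_total by simp
  finally show ?thesis .
qed


definition sb :: "nat \<Rightarrow> nat \<Rightarrow> real" where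
  "sb a i = (\<Sum>k<d. (cmod (U $$ (a * d + k, i)))\<^sup>2)"

lemma sb_nonneg: "sb a i \<ge> 0" unfolding sb_def by (intro sum_nonneg) auto

lemma c_bound: assumes a: "a < d" and i: "i < d * d" shows "l ! i * sb a i \<le> 1 / real d"
proof -
  let ?J = "jamiolkowski d \<Phi>"
  define x where "x k = U $$ (a * d + k, i)" for k
  define s where "s = sb a i"
  define w where "w m = (\<Sum>k\<in>{..<d}. cnj (x k) * U $$ (a * d + k, m))" for m
  have "Qb a x = (\<Sum>k\<in>{..<d}. \<Sum>j\<in>{..<d}. cnj (x k) * ?J $$ (a * d + k, a * d + j) * x j)"
    unfolding Qb_def ..
  also have "\<dots> = (\<Sum>m<d * d. complex_of_real (l ! m) * complex_of_real ((cmod (w m))\<^sup>2))"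
    unfolding w_def by (rule form_expand[where \<iota> = "\<lambda>k. a * d + k"]) (simp add: EX block_index a)
  finally have Qe: "Re (Qb a x) = (\<Sum>m<d * d. l ! m * (cmod (w m))\<^sup>2)" by simp
  have wi: "w i = complex_of_real s"
    unfolding w_def s_def sb_def x_def of_real_sum
    by (rule sum.cong[OF refl], subst complex_norm_square, simp add: mult.commute)
  have "l ! i * s\<^sup>2 = l ! i * (cmod (w i))\<^sup>2" unfolding wi using sb_nonneg[of a i] by (simp add: s_def)
  also have "\<dots> \<le> (\<Sum>m<d * d. l ! m * (cmod (w m))\<^sup>2)"
    by (rule member_le_sum) (use i l_nonneg in auto)
  also have "\<dots> \<le> s / real d" unfolding Qe[symmetric] s_def sb_def x_def by (rule Qb_le[OF a])
  finally have ineq: "l ! i * s\<^sup>2 \<le> s / real d" .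
  show ?thesis
  proof (cases "s = 0")
    case True then show ?thesis by (simp add: s_def)
  next
    case False
    then have sp: "s > 0" using sb_nonneg[of a i] unfolding s_def by simp
    have "(l ! i * s) * s \<le> (1 / real d) * s" using ineq by (simp add: power2_eq_square mult_ac)
    from mult_right_le_imp_le[OF this sp] show ?thesis unfolding s_def .
  qed
qed

lemma c_row: assumes a: "a < d" shows "(\<Sum>i<d * d. l ! i * sb a i) = (\<Sum>j<d. T $$ (a, j)) / real d"
proof -
  have diag: "(\<Sum>m<d * d. l ! m * (cmod (U $$ (a * d + k, m)))\<^sup>2) = T $$ (a, k) / real d" if k: "k < d" for k
  proof -
    have "complex_of_real (T $$ (a, k) / real d) = jamiolkowski d \<Phi> $$ (a * d + k, a * d + k)"
      using J_diag[OF d C a k] by simp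
    also have "\<dots> = (\<Sum>m<d * d. U $$ (a * d + k, m) * complex_of_real (l ! m) * cnj (U $$ (a * d + k, m)))"
      using EX block_index[OF a k] by simp
    also have "\<dots> = complex_of_real (\<Sum>m<d * d. l ! m * (cmod (U $$ (a * d + k, m)))\<^sup>2)"
      unfolding of_real_sum
      by (rule sum.cong[OF refl], subst of_real_mult, subst complex_norm_square, simp add: mult_ac)
    finally show ?thesis by (simp only: of_real_eq_iff)
  qed
  have "(\<Sum>i<d * d. l ! i * sb a i) = (\<Sum>k<d. \<Sum>i<d * d. l ! i * (cmod (U $$ (a * d + k, i)))\<^sup>2)"
    unfolding sb_def sum_distrib_left by (rule sum.swap)
  also have "\<dots> = (\<Sum>k<d. T $$ (a, k) / real d)" by (intro sum.cong refl) (simp add: diag)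
  finally show ?thesis by (simp add: sum_divide_distrib)
qed

lemma c_col: assumes i: "i < d * d" shows "(\<Sum>a<d. sb a i) = 1"
proof -
  have "complex_of_real (\<Sum>a<d. sb a i) = complex_of_real (\<Sum>p<d * d. (cmod (U $$ (p, i)))\<^sup>2)"
    unfolding sb_def sum_blocks ..
  also have "\<dots> = (\<Sum>p<d * d. cnj (U $$ (p,i)) * U $$ (p,i))"
    unfolding of_real_sum by (rule sum.cong[OF refl], subst complex_norm_square, simp add: mult.commute)
  also have "\<dots> = 1" using ON[OF i i] by simp
  finally show ?thesis by (simp only: of_real_eq_1_iff)
qed

lemma main_bound: assumes S: "S \<subseteq> {..<d * d}" and k: "card S \<le> k"
  shows "(\<Sum>i\<in>S. l ! i) \<le> (\<Sum>a<d. min (real k) (\<Sum>j<d. T $$ (a, j))) / real d"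
proof -
  have fin: "finite S" using S finite_subset by blast
  have "(\<Sum>i\<in>S. l ! i) = (\<Sum>i\<in>S. \<Sum>a<d. l ! i * sb a i)"
    by (intro sum.cong refl) (use S c_col in \<open>auto simp: sum_distrib_left[symmetric]\<close>)
  also have "\<dots> = (\<Sum>a<d. \<Sum>i\<in>S. l ! i * sb a i)" by (rule sum.swap)
  also have "\<dots> \<le> (\<Sum>a<d. min (real k) (\<Sum>j<d. T $$ (a, j)) / real d)"
  proof (rule sum_mono)
    fix a assume "a \<in> {..<d}"
    then have a: "a < d" by simp
    have nn: "i \<in> {..<d*d} \<Longrightarrow> 0 \<le> l ! i * sb a i" for i using l_nonneg sb_nonneg by simp
    have 1: "(\<Sum>i\<in>S. l ! i * sb a i) \<le> (\<Sum>j<d. T $$ (a, j)) / real d"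
      unfolding c_row[OF a, symmetric] by (rule sum_mono2) (use S nn in auto)
    have "(\<Sum>i\<in>S. l ! i * sb a i) \<le> (\<Sum>i\<in>S. 1 / real d)"
      by (rule sum_mono) (use S c_bound[OF a] in auto)
    also have "\<dots> = real (card S) / real d" by simp
    also have "\<dots> \<le> real k / real d" using k by (simp add: divide_right_mono)
    finally have 2: "(\<Sum>i\<in>S. l ! i * sb a i) \<le> real k / real d" .
    show "(\<Sum>i\<in>S. l ! i * sb a i) \<le> min (real k) (\<Sum>j<d. T $$ (a, j)) / real d"
      using 1 2 by (simp add: min_def)
  qed
  also have "\<dots> = (\<Sum>a<d. min (real k) (\<Sum>j<d. T $$ (a, j))) / real d" by (simp add: sum_divide_distrib)
  finally show ?thesis .
qed

end

lemma sum_list_take_nth: "k \<le> length xs \<Longrightarrow> sum_list (take k xs) = (\<Sum>t<k. xs ! t)"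
  by (simp add: sum_list_sum_nth lessThan_atLeast0 min_def)

lemma s_vec_nth: assumes t: "t < d * d"
  shows "s_vec d T a ! t = (let r = (\<Sum>j<d. T $$ (a, j)) in
     if t < nat \<lfloor>r\<rfloor> then 1 else if t = nat \<lfloor>r\<rfloor> then r - of_int \<lfloor>r\<rfloor> else 0)"
  unfolding s_vec_def Let_def using t by simp

lemma partial_sum_f: fixes r :: real assumes r: "r \<ge> 0"
  shows "(\<Sum>t<k. if t < nat \<lfloor>r\<rfloor> then 1 else if t = nat \<lfloor>r\<rfloor> then r - of_int \<lfloor>r\<rfloor> else 0)
    = (if k \<le> nat \<lfloor>r\<rfloor> then real k else r)"
proof (induction k)
  case (Suc k)
  have fl: "real (nat \<lfloor>r\<rfloor>) = of_int \<lfloor>r\<rfloor>" using r by simp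
  show ?case using Suc fl by (cases "k < nat \<lfloor>r\<rfloor>"; cases "k = nat \<lfloor>r\<rfloor>") auto
qed simp

lemma s_partial: assumes k: "k \<le> d * d" and r: "(\<Sum>j<d. T $$ (a, j)) \<ge> 0"
  shows "min (real k) (\<Sum>j<d. T $$ (a, j)) \<le> (\<Sum>t<k. s_vec d T a ! t)"
proof -
  define r where "r = (\<Sum>j<d. T $$ (a, j))"
  have "(\<Sum>t<k. s_vec d T a ! t) = (\<Sum>t<k. if t < nat \<lfloor>r\<rfloor> then 1 else if t = nat \<lfloor>r\<rfloor> then r - of_int \<lfloor>r\<rfloor> else 0)"
    by (intro sum.cong refl) (use k in \<open>simp add: s_vec_nth r_def Let_def\<close>)
  also have "\<dots> = (if k \<le> nat \<lfloor>r\<rfloor> then real k else r)" using partial_sum_f r unfolding r_def by blast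
  finally show ?thesis unfolding r_def[symmetric] by (auto simp: min_def)
qed

lemma s_vec_mono: assumes t: "t1 \<le> t2" "t2 < d * d" and r: "(\<Sum>j<d. T $$ (a, j)) \<ge> 0"
  shows "s_vec d T a ! t2 \<le> s_vec d T a ! t1"
proof -
  define r where "r = (\<Sum>j<d. T $$ (a, j))"
  have fr: "r - of_int \<lfloor>r\<rfloor> \<ge> 0" "r - of_int \<lfloor>r\<rfloor> \<le> 1" by linarith+
  show ?thesis using t fr unfolding s_vec_nth[OF t(2)] s_vec_nth[of t1, OF le_less_trans[OF t]] r_def[symmetric] Let_def
    by auto
qed

lemma mu_nth: "t < d * d \<Longrightarrow> mu_maj d T ! t = (1 / real d) * (\<Sum>i<d. s_vec d T i ! t)"
  unfolding mu_maj_def by simp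

lemma mu_sorted: assumes cs: "column_stochastic d T"
  shows "rev (sort (mu_maj d T)) = mu_maj d T"
proof -
  have r: "(\<Sum>j<d. T $$ (a, j)) \<ge> 0" if "a < d" for a
    using cs that unfolding column_stochastic_def by (intro sum_nonneg) auto
  have "sorted_wrt (\<ge>) (mu_maj d T)"
    unfolding sorted_wrt_iff_nth_less
  proof (intro allI impI)
    fix i j assume ij: "i < j" "j < length (mu_maj d T)"
    then have j: "j < d * d" by (simp add: mu_maj_def)
    have "(\<Sum>a<d. s_vec d T a ! j) \<le> (\<Sum>a<d. s_vec d T a ! i)"
      by (rule sum_mono) (use s_vec_mono ij j r in auto)
    then show "mu_maj d T ! j \<le> mu_maj d T ! i"
      unfolding mu_nth[OF j] mu_nth[OF less_trans[OF ij(1) j]] by (simp add: divide_right_mono)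
  qed
  then have "sorted (rev (mu_maj d T))" by (simp add: sorted_wrt_rev)
  from properties_for_sort[OF _ this] have "sort (mu_maj d T) = rev (mu_maj d T)" by simp
  then show ?thesis by simp
qed

lemma mu_take: assumes cs: "column_stochastic d T" and k: "k \<le> d * d"
  shows "(\<Sum>a<d. min (real k) (\<Sum>j<d. T $$ (a, j))) / real d \<le> sum_list (take k (mu_maj d T))"
proof -
  have r: "(\<Sum>j<d. T $$ (a, j)) \<ge> 0" if "a < d" for a
    using cs that unfolding column_stochastic_def by (intro sum_nonneg) auto
  have "sum_list (take k (mu_maj d T)) = (\<Sum>t<k. mu_maj d T ! t)"
    using k by (intro sum_list_take_nth) (simp add: mu_maj_def)
  also have "\<dots> = (\<Sum>t<k. (1 / real d) * (\<Sum>a<d. s_vec d T a ! t))"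
    using k by (intro sum.cong refl) (simp add: mu_nth)
  also have "\<dots> = (\<Sum>a<d. \<Sum>t<k. s_vec d T a ! t) / real d"
    by (subst sum.swap) (simp add: sum_divide_distrib)
  finally have e: "sum_list (take k (mu_maj d T)) = (\<Sum>a<d. \<Sum>t<k. s_vec d T a ! t) / real d" .
  have "(\<Sum>a<d. min (real k) (\<Sum>j<d. T $$ (a, j))) \<le> (\<Sum>a<d. \<Sum>t<k. s_vec d T a ! t)"
    by (rule sum_mono) (use s_partial[OF k] r in auto)
  then show ?thesis unfolding e by (simp add: divide_right_mono)
qed

theorem mainTheorem3:
  fixes d :: nat and T :: "real mat" and \<Phi> :: "complex mat \<Rightarrow> complex mat"
  assumes "d \<ge> 1"
    and "column_stochastic d T"
    and "quantum_channel d \<Phi>"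
    and "classical_action_is d \<Phi> T"
  shows "majorizes (mu_maj d T) (eigvals_desc (jamiolkowski d \<Phi>))"
proof -
  note d = assms(1) and cs = assms(2) and Q = assms(3) and C = assms(4)
  let ?J = "jamiolkowski d \<Phi>"
  have Jc: "?J \<in> carrier_mat (d * d) (d * d)" by (rule J_carrier)
  have h: "adj ?J = ?J" by (rule psd_herm[OF J_psd[OF d Q]])
  obtain U l where U: "U \<in> carrier_mat (d * d) (d * d)" and ll: "length l = d * d"
    and ON: "\<And>i j. i < d * d \<Longrightarrow> j < d * d \<Longrightarrow> (\<Sum>p<d * d. cnj (U $$ (p,i)) * U $$ (p,j)) = (if i = j then 1 else 0)"
    and EX: "\<And>p q. p < d * d \<Longrightarrow> q < d * d \<Longrightarrow> ?J $$ (p,q) = (\<Sum>m<d * d. U $$ (p,m) * complex_of_real (l ! m) * cnj (U $$ (q,m)))"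
    and cp: "char_poly ?J = (\<Prod>e\<leftarrow>l. [:- complex_of_real e, 1:])"
    by (rule spectral_facts[OF Jc h]) (rule that, assumption+)
  have ev: "eigvals_desc ?J = rev (sort l)" by (rule eigvals_desc_char[OF Jc ll cp])
  have mu: "rev (sort (mu_maj d T)) = mu_maj d T" by (rule mu_sorted[OF cs])
  have lenmu: "length (mu_maj d T) = d * d" by (simp add: mu_maj_def)
  have "sort (rev (sort l)) = sort l" by (rule properties_for_sort) simp_all
  then have srt: "rev (sort (rev (sort l))) = rev (sort l)" by simp
  show ?thesis unfolding majorizes_def ev mu srt
  proof (intro conjI ballI)
    show "length (mu_maj d T) = length (rev (sort l))" using lenmu ll by simp
    fix k assume "k \<in> {1..length (mu_maj d T)}"
    then have k: "k \<le> d * d" using lenmu by simp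
    have "mset (rev (sort l)) = mset l" by simp
    then obtain p where p: "p permutes {..<length l}" and pl: "permute_list p l = rev (sort l)"
      by (rule mset_eq_permutation)
    have inj: "inj_on p {..<k}" using permutes_inj_on[OF p] .
    have S: "p ` {..<k} \<subseteq> {..<d * d}"
    proof
      fix x assume "x \<in> p ` {..<k}"
      then obtain t where t: "t < k" and x: "x = p t" by blast
      have "t \<in> {..<length l}" using t k ll by simp
      then have "p t \<in> {..<length l}" using permutes_in_image[OF p, of t] by simp
      then show "x \<in> {..<d * d}" using x ll by simp
    qed
    have cS: "card (p ` {..<k}) \<le> k" using card_image[OF inj] by simp
    have "sum_list (take k (rev (sort l))) = (\<Sum>t<k. rev (sort l) ! t)"
      using k ll by (intro sum_list_take_nth) simp
    also have "\<dots> = (\<Sum>t<k. l ! p t)"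
      unfolding pl[symmetric] using k ll by (intro sum.cong refl) (simp add: permute_list_nth[OF p])
    also have "\<dots> = (\<Sum>i\<in>p ` {..<k}. l ! i)" by (simp add: sum.reindex[OF inj])
    also have "\<dots> \<le> (\<Sum>a<d. min (real k) (\<Sum>j<d. T $$ (a, j))) / real d"
      by (rule main_bound[OF d Q C ll ON EX S cS])
    also have "\<dots> \<le> sum_list (take k (mu_maj d T))" by (rule mu_take[OF cs k])
    finally show "sum_list (take k (rev (sort l))) \<le> sum_list (take k (mu_maj d T))" .
  qed
qed

end
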